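(* Let $p>2$ and fix $0<z<\big(\frac1{p-1}\big)^{1/(p-2)}$. The function $\ell:(0,z)\to\mathbb R^+$, $\ell(w)=\frac1{\sqrt2}\int_w^z\frac{dt}{\sqrt{f(t)-f(w)}}$, is strictly decreasing.
   Context: $f(x)=\frac12x^2-\frac1p|x|^p$. *)

theory Defs
  imports "HOL-Analysis.Analysis"
begin

definition fpot :: "real \<Rightarrow> real \<Rightarrow> real" where
  "fpot p x = x\<^sup>2 / 2 - \<bar>x\<bar> powr p / p"

text \<open>The integrand is singular (but integrable) at t = w; the integral is the
  Henstock-Kurzweil integral, which for this nonnegative integrand coincides
  with the (absolutely convergent) improper/Lebesgue integral.\<close>
definition ell :: "real \<Rightarrow> real \<Rightarrow> real \<Rightarrow> real" where
  "ell p z w = (1 / sqrt 2) * integral {w..z} (\<lambda>t. 1 / sqrt (fpot p t - fpot p w))"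

end

theory Submission
  imports Defs
begin

lemma pow_small:
  fixes p x :: real
  assumes "p > 2" "0 < x" "x < (1 / (p - 1)) powr (1 / (p - 2))"
  shows "x powr (p-2) < 1/(p-1)"
proof -
  have "x powr (p-2) < ((1 / (p - 1)) powr (1 / (p - 2))) powr (p-2)"
    using assms by (intro powr_less_mono2) auto
  also have "\<dots> = 1/(p-1)" using assms by (simp add: powr_powr)
  finally show ?thesis .
qed

lemma deriv_f:
  fixes p x :: real
  assumes "0 < x" "p > 2"
  shows "(fpot p has_real_derivative (x - x powr (p-1))) (at x)"
proof -
  have d: "((\<lambda>y. y\<^sup>2 / 2 - y powr p / p) has_real_derivative (x - x powr (p-1))) (at x)"
    using assms
    by (auto intro!: derivative_eq_intros has_real_derivative_powr[THEN DERIV_chain2])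
  show ?thesis
  proof (rule has_field_derivative_transform_within_open[OF d, of "{0<..}"])
    show "\<And>y. y \<in> {0<..} \<Longrightarrow> y\<^sup>2 / 2 - y powr p / p = fpot p y" by (simp add: fpot_def)
  qed (use assms in auto)
qed

lemma deriv_fd:
  fixes p x :: real
  assumes "0 < x" "p > 2"
  shows "((\<lambda>x. x - x powr (p-1)) has_real_derivative (1 - (p-1) * x powr (p-2))) (at x)"
  using assms
  by (auto intro!: derivative_eq_intros has_real_derivative_powr[THEN DERIV_chain2])

lemma fd_pos:
  fixes p x :: real
  assumes "p > 2" "0 < x" "x < (1 / (p - 1)) powr (1 / (p - 2))"
  shows "x - x powr (p-1) > 0"
proof -
  have "x powr (p-1) = x powr (p-2) * x powr 1" using powr_add[of x "p-2" 1] by simp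
  hence "x powr (p-1) = x powr (p-2) * x" using assms by simp
  also have "\<dots> < 1/(p-1) * x" using pow_small[OF assms] assms by (intro mult_strict_right_mono) auto
  also have "\<dots> \<le> x" using assms by (simp add: field_simps)
  finally show ?thesis by simp
qed

lemma fdd_pos:
  fixes p x :: real
  assumes "p > 2" "0 < x" "x < (1 / (p - 1)) powr (1 / (p - 2))"
  shows "1 - (p-1) * x powr (p-2) > 0"
  using pow_small[OF assms] assms by (simp add: field_simps)

lemma fd_mono:
  fixes p a b :: real
  assumes "p > 2" "0 < a" "a \<le> b" "b < (1 / (p - 1)) powr (1 / (p - 2))"
  shows "a - a powr (p-1) \<le> b - b powr (p-1)"
  using assms
  by (intro DERIV_nonneg_imp_nondecreasing[where f="\<lambda>x. x - x powr (p-1)"])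
     (auto intro!: exI deriv_fd less_imp_le[OF fdd_pos])

lemma f_strict:
  fixes p a b :: real
  assumes "p > 2" "0 < a" "a < b" "b < (1 / (p - 1)) powr (1 / (p - 2))"
  shows "fpot p a < fpot p b"
  using assms
  by (intro DERIV_pos_imp_increasing[where f="fpot p"])
     (auto intro!: exI deriv_f fd_pos)

lemma f_incr:
  fixes p w t d :: real
  assumes "p > 2" "0 < w" "w \<le> t" "0 \<le> d" "t + d < (1 / (p - 1)) powr (1 / (p - 2))"
  shows "fpot p (w + d) - fpot p w \<le> fpot p (t + d) - fpot p t"
proof -
  have "(\<lambda>x. fpot p (x + d) - fpot p x) w \<le> (\<lambda>x. fpot p (x + d) - fpot p x) t"
  proof (rule DERIV_nonneg_imp_nondecreasing[OF assms(3)])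
    fix x assume x: "w \<le> x" "x \<le> t"
    show "\<exists>y. ((\<lambda>x. fpot p (x + d) - fpot p x) has_real_derivative y) (at x) \<and> 0 \<le> y"
      using assms x
      by (intro exI[of _ "((x+d) - (x+d) powr (p-1)) - (x - x powr (p-1))"])
         (use fd_mono[of p x "x+d"] in \<open>auto intro!: derivative_eq_intros deriv_f[THEN DERIV_chain2] deriv_f\<close>)
  qed
  then show ?thesis by simp
qed

lemma f_lower:
  fixes p w t :: real
  assumes "p > 2" "0 < w" "w \<le> t" "t < (1 / (p - 1)) powr (1 / (p - 2))"
  shows "(w - w powr (p-1)) * (t - w) \<le> fpot p t - fpot p w"
proof -
  have "(\<lambda>x. fpot p x - fpot p w - (w - w powr (p-1)) * (x - w)) w \<le> (\<lambda>x. fpot p x - fpot p w - (w - w powr (p-1)) * (x - w)) t"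
  proof (rule DERIV_nonneg_imp_nondecreasing[OF assms(3)])
    fix x assume x: "w \<le> x" "x \<le> t"
    show "\<exists>y. ((\<lambda>x. fpot p x - fpot p w - (w - w powr (p-1)) * (x - w)) has_real_derivative y) (at x) \<and> 0 \<le> y"
      using assms x
      by (intro exI[of _ "(x - x powr (p-1)) - (w - w powr (p-1))"])
         (auto intro!: derivative_eq_intros deriv_f fd_mono)
  qed
  then show ?thesis by simp
qed

lemma g_integrable:
  fixes p w z :: real
  assumes "p > 2" "0 < w" "w < z" "z < (1 / (p - 1)) powr (1 / (p - 2))"
  shows "(\<lambda>t. 1 / sqrt (fpot p t - fpot p w)) integrable_on {w..z}"
proof -
  define c where "c = w - w powr (p-1)"
  have c: "c > 0" unfolding c_def using fd_pos[of p w] assms by auto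
  have "((\<lambda>t. 1/sqrt c * (1/sqrt(t-w))) has_integral (2/sqrt c * sqrt(z-w) - 2/sqrt c * sqrt(w-w))) {w..z}"
  proof (rule fundamental_theorem_of_calculus_interior)
    show "continuous_on {w..z} (\<lambda>t. 2/sqrt c * sqrt(t-w))"
      by (intro continuous_intros)
    fix x assume x: "x \<in> {w<..<z}"
    show "((\<lambda>t. 2/sqrt c * sqrt(t-w)) has_vector_derivative 1/sqrt c * (1/sqrt(x-w))) (at x)"
      unfolding has_real_derivative_iff_has_vector_derivative[symmetric]
      using x c by (auto intro!: derivative_eq_intros simp: field_simps)
  qed (use assms in auto)
  hence Gi: "(\<lambda>t. 1/sqrt c * (1/sqrt(t-w))) integrable_on {w<..<z}"
    using integrable_on_Icc_iff_Ioo by blast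
  have cont: "continuous_on {w<..<z} (\<lambda>t. 1 / sqrt (fpot p t - fpot p w))"
  proof (rule continuous_at_imp_continuous_on, rule ballI)
    fix t assume t: "t \<in> {w<..<z}"
    have "isCont (fpot p) t" using t assms by (intro DERIV_isCont[OF deriv_f]) auto
    moreover have "fpot p t - fpot p w > 0" using t assms f_strict[of p w t] by auto
    ultimately show "isCont (\<lambda>t. 1 / sqrt (fpot p t - fpot p w)) t"
      by (auto intro!: continuous_intros)
  qed
  have "(\<lambda>t. 1 / sqrt (fpot p t - fpot p w)) integrable_on {w<..<z}"
  proof (rule measurable_bounded_by_integrable_imp_integrable_real[OF _ Gi])
    show "(\<lambda>t. 1 / sqrt (fpot p t - fpot p w)) \<in> borel_measurable (lebesgue_on {w<..<z})"
      by (rule continuous_imp_measurable_on_sets_lebesgue[OF cont]) simp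
    show "{w<..<z} \<in> sets lebesgue" by simp
    fix t assume t: "t \<in> {w<..<z}"
    have pos: "c * (t - w) > 0" using t c by auto
    have "c * (t - w) \<le> fpot p t - fpot p w"
      using f_lower[of p w t] assms t unfolding c_def by auto
    hence "sqrt (c * (t - w)) \<le> sqrt (fpot p t - fpot p w)" by simp
    hence "1 / sqrt (fpot p t - fpot p w) \<le> 1 / sqrt (c * (t - w))"
      using pos by (intro divide_left_mono) auto
    moreover have "fpot p t - fpot p w > 0" using pos \<open>c * (t - w) \<le> _\<close> by linarith
    ultimately show "\<bar>1 / sqrt (fpot p t - fpot p w)\<bar> \<le> 1/sqrt c * (1/sqrt(t-w))"
      by (simp add: real_sqrt_mult)
  qed
  thus ?thesis using integrable_on_Icc_iff_Ioo by blast
qed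

theorem lemma3p2:
  fixes p z :: real
  assumes "p > 2"
    and "0 < z"
    and "z < (1 / (p - 1)) powr (1 / (p - 2))"
  shows "\<forall>w1 w2. 0 < w1 \<and> w1 < w2 \<and> w2 < z \<longrightarrow> ell p z w2 < ell p z w1"
proof (intro allI impI)
  fix w1 w2 :: real
  assume w: "0 < w1 \<and> w1 < w2 \<and> w2 < z"
  define d where "d = w2 - w1"
  define g1 where "g1 = (\<lambda>t. 1 / sqrt (fpot p t - fpot p w1))"
  define g2 where "g2 = (\<lambda>t. 1 / sqrt (fpot p t - fpot p w2))"
  have d: "d > 0" "w1 + d = w2" "z - d > w1" using w by (auto simp: d_def)
  have i1: "g1 integrable_on {w1..z}" unfolding g1_def using g_integrable[of p w1 z] assms w by auto
  have i2: "g2 integrable_on {w2..z}" unfolding g2_def using g_integrable[of p w2 z] assms w by auto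
  have "(g2 has_integral integral {w2..z} g2) (cbox w2 z)" using i2 by auto
  from has_integral_affinity'[OF this, of 1 d]
  have "((\<lambda>x. g2 (1 *\<^sub>R x + d)) has_integral integral {w2..z} g2) {w2-d..z-d}" by simp
  have "((\<lambda>s. g2 (s + d)) has_integral integral {w2..z} g2) {w1..z-d}"
  proof -
    have "w2 - d = w1" using d by simp
    thus ?thesis using \<open>((\<lambda>x. g2 (1 *\<^sub>R x + d)) has_integral _) _\<close> by simp
  qed
  hence sh: "integral {w1..z-d} (\<lambda>s. g2 (s + d)) = integral {w2..z} g2"
    and ish: "(\<lambda>s. g2 (s + d)) integrable_on {w1..z-d}"
    by (auto simp: integral_unique)
  have i1a: "g1 integrable_on {w1..z-d}"
    by (rule integrable_subinterval_real[OF i1]) (use d in auto)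
  have i1b: "g1 integrable_on {z-d..z}"
    by (rule integrable_subinterval_real[OF i1]) (use d in auto)
  have le: "integral {w1..z-d} (\<lambda>s. g2 (s + d)) \<le> integral {w1..z-d} g1"
  proof (rule integral_le[OF ish i1a])
    fix s assume s: "s \<in> {w1..z-d}"
    show "g2 (s + d) \<le> g1 s"
    proof (cases "s = w1")
      case True thus ?thesis using d by (simp add: g1_def g2_def)
    next
      case False
      hence "s > w1" using s by auto
      have pos: "fpot p s - fpot p w1 > 0" using f_strict[of p w1 s] \<open>s > w1\<close> s d assms w by auto
      have "fpot p (w1 + d) - fpot p w1 \<le> fpot p (s + d) - fpot p s"
        using f_incr[of p w1 s d] s d assms w by auto
      hence "fpot p s - fpot p w1 \<le> fpot p (s + d) - fpot p w2" using d by simp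
      hence "sqrt (fpot p s - fpot p w1) \<le> sqrt (fpot p (s + d) - fpot p w2)" by simp
      hence "1 / sqrt (fpot p (s + d) - fpot p w2) \<le> 1 / sqrt (fpot p s - fpot p w1)"
        using pos by (intro divide_left_mono) auto
      thus ?thesis by (simp add: g1_def g2_def)
    qed
  qed
  define K where "K = 1 / sqrt (fpot p z - fpot p w1)"
  have K: "K > 0" unfolding K_def using f_strict[of p w1 z] assms w by auto
  have "integral {z-d..z} (\<lambda>t. K) \<le> integral {z-d..z} g1"
  proof (rule integral_le[OF _ i1b])
    show "(\<lambda>t. K) integrable_on {z-d..z}" by (rule integrable_const_ivl)
    fix t assume t: "t \<in> {z-d..z}"
    hence "t > w1" using d by auto
    have pos: "fpot p t - fpot p w1 > 0" using f_strict[of p w1 t] \<open>t > w1\<close> t assms w by auto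
    have "fpot p t \<le> fpot p z"
      using f_strict[of p t z] t assms \<open>t > w1\<close> w by (cases "t = z") auto
    hence "sqrt (fpot p t - fpot p w1) \<le> sqrt (fpot p z - fpot p w1)" by simp
    hence "1 / sqrt (fpot p z - fpot p w1) \<le> 1 / sqrt (fpot p t - fpot p w1)"
      using pos by (intro divide_left_mono) auto
    thus "K \<le> g1 t" by (simp add: K_def g1_def)
  qed
  moreover have "integral {z-d..z} (\<lambda>t. K) = d * K" using d by simp
  ultimately have pos: "integral {z-d..z} g1 > 0" using d K by (smt (verit) mult_pos_pos)
  have comb: "integral {w1..z-d} g1 + integral {z-d..z} g1 = integral {w1..z} g1"
    using d by (intro Henstock_Kurzweil_Integration.integral_combine[OF _ _ i1]) auto
  have "integral {w2..z} g2 < integral {w1..z} g1" using sh le pos comb by linarith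
  thus "ell p z w2 < ell p z w1" unfolding ell_def g1_def g2_def by (simp add: divide_strict_right_mono)
qed

end
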